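(* Consider a linear Gaussian covariance model given by $\mathcal G=(G_0,\dots,G_r)$ and suppose the sample covariance matrix satisfies $S_n\succ 0$. Then the log-likelihood $\ell:\Theta_{\mathcal G}\to\mathbb{R}$, $\ell(v)=-\frac n2\log\det\Sigma_v-\frac n2\mathrm{tr}(S_n\Sigma_v^{-1})$, is strictly concave on the convex set $\Delta_{2S_n}=\{v\in\Theta_{\mathcal G}: 0\prec\Sigma_v\prec 2S_n\}$. In particular, maximizing $\ell$ over $\Delta_{2S_n}$ is a convex optimization problem.
   Context: $\mathbb{S}^p$ denotes real symmetric $p\times p$ matrices with inner product $\langle A,B\rangle=\mathrm{tr}(AB)$, $\mathbb{S}^p_{\succ0}$ the positive definite ones, and $A\succ B$ means $A-B$ is positive definite. A linear Gaussian covariance model is specified by $G_0,G_1,\dots,G_r\in\mathbb{S}^p$ with $G_1,\dots,G_r$ linearly independent and $\mathrm{tr}(G_0G_i)=0$ for $i=1,\dots,r$; for $v\in\mathbb{R}^r$ put $\Sigma_v=G_0+\sum_{i=1}^r v_iG_i$, and the parameter space is $\Theta_{\mathcal G}=\{v\in\mathbb{R}^r:\Sigma_v\in\mathbb{S}^p_{\succ0}\}$ (assumed nonempty). Given observations $X_1,\dots,X_n\in\mathbb{R}^p$, $\bar X=\frac1n\sum X_i$ and $S_n=\frac1n\sum_{i=1}^n(X_i-\bar X)(X_i-\bar X)^T$. *)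

theory Defs
  imports "HOL-Analysis.Analysis"
begin

definition sym_mat :: "real^'p^'p \<Rightarrow> bool" where
  "sym_mat A \<longleftrightarrow> transpose A = A"

definition pos_def :: "real^'p^'p \<Rightarrow> bool" where
  "pos_def A \<longleftrightarrow> sym_mat A \<and> (\<forall>x. x \<noteq> 0 \<longrightarrow> x \<bullet> (A *v x) > 0)"

definition loewner_less :: "real^'p^'p \<Rightarrow> real^'p^'p \<Rightarrow> bool" where
  "loewner_less A B \<longleftrightarrow> pos_def (B - A)"

definition outer :: "real^'p \<Rightarrow> real^'p \<Rightarrow> real^'p^'p" where
  "outer x y = (\<chi> a b. x $ a * y $ b)"

definition sample_mean :: "nat \<Rightarrow> (nat \<Rightarrow> real^'p) \<Rightarrow> real^'p" where
  "sample_mean n X = (1 / real n) *\<^sub>R (\<Sum>i\<in>{1..n}. X i)"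

definition sample_cov :: "nat \<Rightarrow> (nat \<Rightarrow> real^'p) \<Rightarrow> real^'p^'p" where
  "sample_cov n X = (1 / real n) *\<^sub>R
     (\<Sum>i\<in>{1..n}. outer (X i - sample_mean n X) (X i - sample_mean n X))"

definition Sigma :: "real^'p^'p \<Rightarrow> ('r::finite \<Rightarrow> real^'p^'p) \<Rightarrow> real^'r \<Rightarrow> real^'p^'p" where
  "Sigma G0 G v = G0 + (\<Sum>i\<in>UNIV. (v $ i) *\<^sub>R G i)"

definition Theta :: "real^'p^'p \<Rightarrow> ('r::finite \<Rightarrow> real^'p^'p) \<Rightarrow> (real^'r) set" where
  "Theta G0 G = {v. pos_def (Sigma G0 G v)}"

definition Delta2 :: "real^'p^'p \<Rightarrow> ('r::finite \<Rightarrow> real^'p^'p) \<Rightarrow> real^'p^'p \<Rightarrow> (real^'r) set" where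
  "Delta2 G0 G S = {v \<in> Theta G0 G. loewner_less 0 (Sigma G0 G v)
                      \<and> loewner_less (Sigma G0 G v) (2 *\<^sub>R S)}"

definition loglik :: "nat \<Rightarrow> real^'p^'p \<Rightarrow> real^'p^'p \<Rightarrow> ('r::finite \<Rightarrow> real^'p^'p) \<Rightarrow> real^'r \<Rightarrow> real" where
  "loglik n S G0 G v = - (real n / 2) * ln (det (Sigma G0 G v))
                       - (real n / 2) * trace (S ** matrix_inv (Sigma G0 G v))"

definition strictly_concave_on :: "'a::real_vector set \<Rightarrow> ('a \<Rightarrow> real) \<Rightarrow> bool" where
  "strictly_concave_on A f \<longleftrightarrow>
     (\<forall>x\<in>A. \<forall>y\<in>A. \<forall>t. x \<noteq> y \<and> 0 < t \<and> t < 1 \<longrightarrow>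
        f ((1 - t) *\<^sub>R x + t *\<^sub>R y) > (1 - t) * f x + t * f y)"

end

theory Submission
  imports Defs
begin

lemma sym_inner:
  fixes A :: "real^'p^'p"
  assumes "sym_mat A"
  shows "x \<bullet> (A *v y) = y \<bullet> (A *v x)"
proof -
  have "x \<bullet> (A *v y) = (x v* A) \<bullet> y" by (simp add: dot_lmul_matrix)
  also have "x v* A = A *v x"
    using assms unfolding sym_mat_def by (metis vector_transpose_matrix)
  finally show ?thesis by (simp add: inner_commute)
qed

lemma cont_quad: "continuous_on S (\<lambda>x::real^'p. x \<bullet> ((A::real^'p^'p) *v x))"
  unfolding inner_vec_def matrix_vector_mult_def
  by (intro continuous_intros)

lemma scaleR_mvmult: "((c::real) *\<^sub>R (A::real^'n^'m)) *v x = c *\<^sub>R (A *v x)"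
  by (simp add: matrix_vector_mult_def vec_eq_iff sum_distrib_left algebra_simps)

lemma DIM_p: "DIM(real^'p) = CARD('p)" by simp


lemma quad_nonpos_lin:
  fixes a b :: real
  assumes "\<And>s. 2 * s * a + s^2 * b \<le> 0"
  shows "a = 0"
proof (rule ccontr)
  assume "a \<noteq> 0"
  define s where "s = a / (\<bar>b\<bar> + 1)"
  have pos: "\<bar>b\<bar> + 1 > 0" by simp
  have sc: "s * (\<bar>b\<bar> + 1) = a" using pos by (simp add: s_def)
  have snz: "s \<noteq> 0" using \<open>a \<noteq> 0\<close> sc by auto
  have 1: "s^2 * b \<ge> s^2 * (-\<bar>b\<bar>)" by (intro mult_left_mono) auto
  have 2: "2 * s * a - s^2 * \<bar>b\<bar> = s^2 * (\<bar>b\<bar> + 2)"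
    by (simp add: sc[symmetric] power2_eq_square algebra_simps)
  have 3: "s^2 * (\<bar>b\<bar> + 2) > 0" using snz by (intro mult_pos_pos) auto
  show False using assms[of s] 1 2 3 by simp
qed

lemma step_eig:
  fixes A B :: "real^'p^'p" and I :: "'p set"
  assumes pdA: "pos_def A" and sB: "sym_mat B"
    and cI: "card I < CARD('p)"
    and w: "\<And>i. i \<in> I \<Longrightarrow> B *v w i = lam i *\<^sub>R (A *v w i)"
    and w1: "\<And>i. i \<in> I \<Longrightarrow> w i \<bullet> (A *v w i) = 1"
    and w0: "\<And>i j. i \<in> I \<Longrightarrow> j \<in> I \<Longrightarrow> i \<noteq> j \<Longrightarrow> w i \<bullet> (A *v w j) = 0"
  shows "\<exists>v \<mu>. B *v v = \<mu> *\<^sub>R (A *v v) \<and> v \<bullet> (A *v v) = 1 \<and> (\<forall>j\<in>I. w j \<bullet> (A *v v) = 0)"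
proof -
  have sA: "sym_mat A" using pdA unfolding pos_def_def by auto
  have Apos: "x \<noteq> 0 \<Longrightarrow> x \<bullet> (A *v x) > 0" for x using pdA unfolding pos_def_def by auto
  define W where "W = {x. \<forall>j\<in>I. (A *v w j) \<bullet> x = 0}"
  have Wsub: "x \<in> W \<Longrightarrow> y \<in> W \<Longrightarrow> x + c *\<^sub>R y \<in> W" for x y c
    unfolding W_def by (simp add: inner_add_right)
  have Wsc: "x \<in> W \<Longrightarrow> c *\<^sub>R x \<in> W" for x c
    unfolding W_def by simp
  have clW: "closed W"
  proof -
    have "W = (\<Inter>j\<in>I. {x. (A *v w j) \<bullet> x = 0})" unfolding W_def by auto
    then show ?thesis by (simp add: closed_INT closed_hyperplane)
  qed
  have fI: "finite I" by simp
  have "dim ((\<lambda>j. A *v w j) ` I) \<le> card ((\<lambda>j. A *v w j) ` I)"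
    by (rule dim_le_card') simp
  also have "\<dots> \<le> card I" by (rule card_image_le) simp
  finally have "dim ((\<lambda>j. A *v w j) ` I) < DIM(real^'p)" using cI by simp
  then obtain z where z: "z \<noteq> 0" "\<And>y. y \<in> span ((\<lambda>j. A *v w j) ` I) \<Longrightarrow> orthogonal z y"
    using orthogonal_to_subspace_exists by metis
  have zW: "z \<in> W" unfolding W_def
  proof (intro CollectI ballI)
    fix j assume "j \<in> I"
    then have "orthogonal z (A *v w j)" by (intro z(2) span_base) auto
    then show "(A *v w j) \<bullet> z = 0" by (simp add: orthogonal_def inner_commute)
  qed
  define K where "K = sphere (0::real^'p) 1 \<inter> W"
  have cK: "compact K" unfolding K_def using clW by (simp add: compact_Int_closed)
  have zK: "(1/norm z) *\<^sub>R z \<in> K" unfolding K_def using z zW Wsc by simp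
  define R where "R x = (x \<bullet> (B *v x)) / (x \<bullet> (A *v x))" for x
  have Kpos': "x \<in> K \<Longrightarrow> x \<bullet> (A *v x) > 0" for x
  proof -
    assume "x \<in> K"
    then have "x \<noteq> 0" unfolding K_def by auto
    then show ?thesis by (rule Apos)
  qed
  have Kpos: "x \<in> K \<Longrightarrow> x \<bullet> (A *v x) \<noteq> 0" for x using Kpos'[of x] by simp
  have contR: "continuous_on K R"
    unfolding R_def using Kpos by (intro continuous_on_divide cont_quad) auto
  obtain w0 where w0K: "w0 \<in> K" and w0max: "\<And>x. x \<in> K \<Longrightarrow> R x \<le> R w0"
    using continuous_attains_sup[OF cK _ contR] zK by blast
  define \<mu> where "\<mu> = R w0"
  have w0W: "w0 \<in> W" and w0nz: "w0 \<noteq> 0" using w0K unfolding K_def by auto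
  have bound: "x \<bullet> (B *v x) \<le> \<mu> * (x \<bullet> (A *v x))" if xW: "x \<in> W" for x
  proof (cases "x = 0")
    case True then show ?thesis by simp
  next
    case False
    define x' where "x' = (1/norm x) *\<^sub>R x"
    have "x' \<in> K" unfolding K_def x'_def using False xW Wsc by simp
    then have "R x' \<le> \<mu>" using w0max \<mu>_def by simp
    moreover have "R x' = R x"
      unfolding R_def x'_def using False
      by (simp add: matrix_vector_mult_scaleR inner_scaleR_left inner_scaleR_right)
    moreover have "x \<bullet> (A *v x) > 0" using Apos False by simp
    ultimately show ?thesis unfolding R_def by (simp add: field_simps)
  qed
  define E where "E = B - \<mu> *\<^sub>R A"
  have sE: "sym_mat E" using sA sB unfolding sym_mat_def E_def
    by (simp add: transpose_def vec_eq_iff)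
  have Ev: "E *v x = B *v x - \<mu> *\<^sub>R (A *v x)" for x
    unfolding E_def by (simp add: matrix_vector_mult_diff_rdistrib scaleR_mvmult)
  have qW: "x \<in> W \<Longrightarrow> x \<bullet> (E *v x) \<le> 0" for x
    using bound[of x] by (simp add: Ev inner_diff_right)
  have qw0: "w0 \<bullet> (E *v w0) = 0"
    using Kpos[OF w0K] by (simp add: Ev inner_diff_right \<mu>_def R_def)
  have orthW: "y \<bullet> (E *v w0) = 0" if yW: "y \<in> W" for y
  proof (rule quad_nonpos_lin[of "y \<bullet> (E *v w0)" "y \<bullet> (E *v y)"])
    fix s :: real
    have "(w0 + s *\<^sub>R y) \<bullet> (E *v (w0 + s *\<^sub>R y)) \<le> 0" by (rule qW[OF Wsub[OF w0W yW]])
    moreover have "(w0 + s *\<^sub>R y) \<bullet> (E *v (w0 + s *\<^sub>R y)) =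
        w0 \<bullet> (E *v w0) + 2 * s * (y \<bullet> (E *v w0)) + s^2 * (y \<bullet> (E *v y))"
      using sym_inner[OF sE, of w0 y]
      by (simp add: matrix_vector_right_distrib matrix_vector_mult_scaleR inner_add_left
            inner_add_right power2_eq_square algebra_simps)
    ultimately show "2 * s * (y \<bullet> (E *v w0)) + s^2 * (y \<bullet> (E *v y)) \<le> 0" using qw0 by simp
  qed
  have wjE: "w j \<bullet> (E *v w0) = 0" if j: "j \<in> I" for j
  proof -
    have "w j \<bullet> (B *v w0) = w0 \<bullet> (B *v w j)" by (rule sym_inner[OF sB])
    also have "\<dots> = lam j * (w0 \<bullet> (A *v w j))" using w[OF j] by simp
    also have "w0 \<bullet> (A *v w j) = (A *v w j) \<bullet> w0" by (simp add: inner_commute)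
    also have "\<dots> = 0" using w0W j unfolding W_def by auto
    finally have 1: "w j \<bullet> (B *v w0) = 0" by simp
    have "w j \<bullet> (A *v w0) = w0 \<bullet> (A *v w j)" by (rule sym_inner[OF sA])
    also have "\<dots> = (A *v w j) \<bullet> w0" by (simp add: inner_commute)
    also have "\<dots> = 0" using w0W j unfolding W_def by auto
    finally show ?thesis using 1 by (simp add: Ev inner_diff_right)
  qed
  have allE: "y \<bullet> (E *v w0) = 0" for y
  proof -
    define z where "z = y - (\<Sum>j\<in>I. (w j \<bullet> (A *v y)) *\<^sub>R w j)"
    have zW: "z \<in> W" unfolding W_def
    proof (intro CollectI ballI)
      fix k assume k: "k \<in> I"
      have "(A *v w k) \<bullet> (\<Sum>j\<in>I. (w j \<bullet> (A *v y)) *\<^sub>R w j)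
          = (\<Sum>j\<in>I. (w j \<bullet> (A *v y)) * ((A *v w k) \<bullet> w j))"
        by (simp add: inner_sum_right)
      also have "\<dots> = (\<Sum>j\<in>I. if j = k then w k \<bullet> (A *v y) else 0)"
      proof (rule sum.cong[OF refl])
        fix j assume j: "j \<in> I"
        have "(A *v w k) \<bullet> w j = w j \<bullet> (A *v w k)" by (simp add: inner_commute)
        then show "(w j \<bullet> (A *v y)) * ((A *v w k) \<bullet> w j) = (if j = k then w k \<bullet> (A *v y) else 0)"
          using w1[OF k] w0[OF j k] by auto
      qed
      also have "\<dots> = w k \<bullet> (A *v y)" using k by simp
      finally have "(A *v w k) \<bullet> (\<Sum>j\<in>I. (w j \<bullet> (A *v y)) *\<^sub>R w j) = w k \<bullet> (A *v y)" .
      moreover have "(A *v w k) \<bullet> y = w k \<bullet> (A *v y)"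
        using sym_inner[OF sA, of "w k" y] by (simp add: inner_commute)
      ultimately show "(A *v w k) \<bullet> z = 0" unfolding z_def by (simp add: inner_diff_right)
    qed
    have ye: "y = z + (\<Sum>j\<in>I. (w j \<bullet> (A *v y)) *\<^sub>R w j)" unfolding z_def by simp
    have "y \<bullet> (E *v w0) = (z + (\<Sum>j\<in>I. (w j \<bullet> (A *v y)) *\<^sub>R w j)) \<bullet> (E *v w0)"
      by (rule arg_cong[where f="\<lambda>u. u \<bullet> (E *v w0)", OF ye])
    also have "\<dots> = z \<bullet> (E *v w0) + (\<Sum>j\<in>I. (w j \<bullet> (A *v y)) * (w j \<bullet> (E *v w0)))"
      by (simp add: inner_add_left inner_sum_left)
    finally have "y \<bullet> (E *v w0) = z \<bullet> (E *v w0) + (\<Sum>j\<in>I. (w j \<bullet> (A *v y)) * (w j \<bullet> (E *v w0)))" .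
    then show ?thesis using orthW[OF zW] wjE by simp
  qed
  have "E *v w0 = 0" using allE[of "E *v w0"] by simp
  then have Bw0: "B *v w0 = \<mu> *\<^sub>R (A *v w0)" by (simp add: Ev)
  define d where "d = w0 \<bullet> (A *v w0)"
  have dpos: "d > 0" using Apos[OF w0nz] d_def by simp
  define v where "v = (1 / sqrt d) *\<^sub>R w0"
  have "B *v v = \<mu> *\<^sub>R (A *v v)" unfolding v_def
    by (simp add: matrix_vector_mult_scaleR Bw0)
  moreover have "v \<bullet> (A *v v) = 1" unfolding v_def using dpos
    by (simp add: matrix_vector_mult_scaleR d_def[symmetric] power2_eq_square[symmetric])
  moreover have "\<forall>j\<in>I. w j \<bullet> (A *v v) = 0"
  proof
    fix j assume j: "j \<in> I"
    have "w j \<bullet> (A *v w0) = (A *v w j) \<bullet> w0" using sym_inner[OF sA, of "w j" w0] by (simp add: inner_commute)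
    also have "\<dots> = 0" using w0W j unfolding W_def by auto
    finally show "w j \<bullet> (A *v v) = 0" unfolding v_def by (simp add: matrix_vector_mult_scaleR)
  qed
  ultimately show ?thesis by blast
qed


lemma gen_eig_set:
  fixes A B :: "real^'p^'p" and I :: "'p set"
  assumes pdA: "pos_def A" and sB: "sym_mat B"
  shows "\<exists>w lam. \<forall>i\<in>I. B *v w i = lam i *\<^sub>R (A *v w i) \<and> w i \<bullet> (A *v w i) = 1
           \<and> (\<forall>j\<in>I. j \<noteq> i \<longrightarrow> w i \<bullet> (A *v w j) = 0)"
proof -
  have sA: "sym_mat A" using pdA unfolding pos_def_def by auto
  have "finite I" by simp
  then show ?thesis
  proof (induction I rule: finite_induct)
    case empty then show ?case by simp
  next
    case (insert k F)
    then obtain w lam where wl: "\<forall>i\<in>F. B *v w i = lam i *\<^sub>R (A *v w i) \<and> w i \<bullet> (A *v w i) = 1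
           \<and> (\<forall>j\<in>F. j \<noteq> i \<longrightarrow> w i \<bullet> (A *v w j) = 0)" by blast
    have "card F < card (insert k F)" using insert by simp
    also have "\<dots> \<le> CARD('p)" by (rule card_mono) auto
    finally have cF: "card F < CARD('p)" .
    have h1: "\<And>i. i \<in> F \<Longrightarrow> B *v w i = lam i *\<^sub>R (A *v w i)" using wl by simp
    have h2: "\<And>i. i \<in> F \<Longrightarrow> w i \<bullet> (A *v w i) = 1" using wl by simp
    have h3: "\<And>i j. i \<in> F \<Longrightarrow> j \<in> F \<Longrightarrow> i \<noteq> j \<Longrightarrow> w i \<bullet> (A *v w j) = 0" using wl by simp
    obtain v \<mu> where v: "B *v v = \<mu> *\<^sub>R (A *v v)" "v \<bullet> (A *v v) = 1" "\<forall>j\<in>F. w j \<bullet> (A *v v) = 0"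
      using step_eig[OF pdA sB cF, where w=w and lam=lam, OF h1 h2 h3] by blast
    define w' where "w' = w(k := v)"
    define lam' where "lam' = lam(k := \<mu>)"
    have fin: "\<forall>i\<in>insert k F. B *v w' i = lam' i *\<^sub>R (A *v w' i) \<and> w' i \<bullet> (A *v w' i) = 1
           \<and> (\<forall>j\<in>insert k F. j \<noteq> i \<longrightarrow> w' i \<bullet> (A *v w' j) = 0)"
    proof
      fix i assume i: "i \<in> insert k F"
      show "B *v w' i = lam' i *\<^sub>R (A *v w' i) \<and> w' i \<bullet> (A *v w' i) = 1
           \<and> (\<forall>j\<in>insert k F. j \<noteq> i \<longrightarrow> w' i \<bullet> (A *v w' j) = 0)"
      proof (cases "i = k")
        case True
        have "\<forall>j\<in>insert k F. j \<noteq> i \<longrightarrow> w' i \<bullet> (A *v w' j) = 0"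
        proof (intro ballI impI)
          fix j assume j: "j \<in> insert k F" "j \<noteq> i"
          then have jF: "j \<in> F" and jk: "j \<noteq> k" using True by auto
          have "v \<bullet> (A *v w j) = w j \<bullet> (A *v v)" by (rule sym_inner[OF sA])
          then show "w' i \<bullet> (A *v w' j) = 0" using True jk jF v(3) by (simp add: w'_def)
        qed
        then show ?thesis using True v by (simp add: w'_def lam'_def)
      next
        case False
        then have iF: "i \<in> F" using i by auto
        have "\<forall>j\<in>insert k F. j \<noteq> i \<longrightarrow> w' i \<bullet> (A *v w' j) = 0"
        proof (intro ballI impI)
          fix j assume j: "j \<in> insert k F" "j \<noteq> i"
          show "w' i \<bullet> (A *v w' j) = 0"
          proof (cases "j = k")
            case True then show ?thesis using False iF v(3) by (simp add: w'_def)
          next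
            case False
            then show ?thesis using \<open>i \<noteq> k\<close> iF j wl by (simp add: w'_def)
          qed
        qed
        then show ?thesis using False iF wl by (simp add: w'_def lam'_def)
      qed
    qed
    show ?case
      apply (rule exI[of _ w'])
      apply (rule exI[of _ lam'])
      by (rule fin)
  qed
qed

lemma gen_eig:
  fixes A B :: "real^'p^'p"
  assumes pdA: "pos_def A" and sB: "sym_mat B"
  obtains w :: "'p \<Rightarrow> real^'p" and lam where "\<And>i. B *v w i = lam i *\<^sub>R (A *v w i)" "\<And>i. w i \<bullet> (A *v w i) = 1"
    "\<And>i j. j \<noteq> i \<Longrightarrow> w i \<bullet> (A *v w j) = 0"
proof -
  obtain w :: "'p \<Rightarrow> real^'p" and lam where h: "\<forall>i\<in>UNIV. B *v w i = lam i *\<^sub>R (A *v w i) \<and> w i \<bullet> (A *v w i) = 1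
           \<and> (\<forall>j\<in>UNIV. j \<noteq> i \<longrightarrow> w i \<bullet> (A *v w j) = 0)"
    using gen_eig_set[OF pdA sB, of UNIV] by blast
  show ?thesis by (rule that[of w lam]) (use h in auto)
qed


definition colmat :: "('p \<Rightarrow> real^'p) \<Rightarrow> real^'p^'p" where
  "colmat w = (\<chi> a b. w b $ a)"

definition dmat :: "('p \<Rightarrow> real) \<Rightarrow> real^'p^'p" where
  "dmat u = (\<chi> i j. if i = j then u i else 0)"

lemma PtMP: "(transpose (colmat w) ** M ** colmat w) $ i $ j = w i \<bullet> (M *v w j)"
proof -
  have l: "(transpose (colmat w) ** M ** colmat w) $ i $ j = (\<Sum>k\<in>UNIV. \<Sum>l\<in>UNIV. w i $ l * M $ l $ k * w j $ k)"
    by (simp add: matrix_matrix_mult_def transpose_def colmat_def sum_distrib_right)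
  have r: "w i \<bullet> (M *v w j) = (\<Sum>l\<in>UNIV. \<Sum>k\<in>UNIV. w i $ l * M $ l $ k * w j $ k)"
    by (simp add: inner_vec_def matrix_vector_mult_def sum_distrib_left mult.assoc)
  show ?thesis unfolding l r by (rule sum.swap)
qed

lemma dmat_mult: "dmat u ** dmat v = dmat (\<lambda>i. u i * v i)"
proof -
  have "(\<Sum>k\<in>UNIV. (if i = k then u i else 0) * (if k = j then v k else 0)) = (if i = j then u i * v i else 0)" for i j :: 'a
  proof -
    have "(\<Sum>k\<in>UNIV. (if i = k then u i else 0) * (if k = j then v k else 0)) = (\<Sum>k\<in>UNIV. if k = i then (if i = j then u i * v i else 0) else 0)"
      by (rule sum.cong) auto
    then show ?thesis by simp
  qed
  then show ?thesis unfolding dmat_def by (simp add: matrix_matrix_mult_def vec_eq_iff)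
qed

lemma trace_dmat: "trace (Y ** dmat u) = (\<Sum>i\<in>UNIV. Y $ i $ i * u i)"
  unfolding dmat_def trace_def by (simp add: matrix_matrix_mult_def if_distrib sum.delta' cong: if_cong)

lemma det_dmat: "det (dmat u) = (\<Prod>i\<in>UNIV. u i)"
  by (subst det_diagonal) (auto simp: dmat_def)

lemma matrix_inv_eq:
  fixes M X :: "real^'p^'p"
  assumes "M ** X = mat 1" "X ** M = mat 1"
  shows "matrix_inv M = X"
proof -
  have ex: "\<exists>A'. M ** A' = mat 1 \<and> A' ** M = mat 1" using assms by blast
  define Y where "Y = matrix_inv M"
  have Y: "M ** Y = mat 1 \<and> Y ** M = mat 1"
    unfolding Y_def matrix_inv_def by (rule someI_ex[OF ex])
  have "Y = Y ** (M ** X)" using assms by (simp add: matrix_mul_rid)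
  also have "\<dots> = (Y ** M) ** X" by (simp add: matrix_mul_assoc)
  also have "\<dots> = X" using Y by (simp add: matrix_mul_lid)
  finally show ?thesis unfolding Y_def .
qed

lemma diag_facts:
  fixes M S :: "real^'p^'p" and w :: "'p \<Rightarrow> real^'p"
  assumes wM: "\<And>i j. w i \<bullet> (M *v w j) = (if i = j then u i else 0)"
    and upos: "\<And>i. u i > 0"
  shows "det M > 0"
    and "ln (det M) = (\<Sum>i\<in>UNIV. ln (u i)) - ln ((det (colmat w))^2)"
    and "trace (S ** matrix_inv M) = (\<Sum>i\<in>UNIV. (w i \<bullet> (S *v w i)) / u i)"
proof -
  define P where "P = colmat w"
  define T where "T = transpose P"
  have TMP: "T ** M ** P = dmat u"
    unfolding T_def P_def by (simp add: vec_eq_iff PtMP wM dmat_def)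
  have "det (T ** M ** P) = det P * det M * det P"
    unfolding T_def by (simp add: det_mul)
  then have "det (dmat u) = det P * det M * det P" using TMP by simp
  then have dd: "(det P)^2 * det M = (\<Prod>i\<in>UNIV. u i)"
    by (simp add: det_dmat power2_eq_square algebra_simps)
  have pp: "(\<Prod>i\<in>UNIV. u i) > 0" using upos by (simp add: prod_pos)
  have "det P \<noteq> 0"
  proof
    assume "det P = 0"
    then have "(\<Prod>i\<in>UNIV. u i) = 0" using dd by (simp del: prod_zero_iff)
    with pp show False by linarith
  qed
  then have dP: "(det P)^2 > 0" by simp
  have dM: "det M = (\<Prod>i\<in>UNIV. u i) / (det P)^2" using dd dP by (simp add: field_simps)
  show "det M > 0" using dM dP pp by simp
  show "ln (det M) = (\<Sum>i\<in>UNIV. ln (u i)) - ln ((det (colmat w))^2)"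
    using dM dP pp upos by (simp add: ln_div ln_prod P_def) (metis less_irrefl)
  define X where "X = P ** dmat (\<lambda>i. 1 / u i) ** T"
  have "(T ** M) ** (P ** dmat (\<lambda>i. 1 / u i)) = mat 1"
  proof -
    have "(T ** M) ** (P ** dmat (\<lambda>i. 1 / u i)) = dmat u ** dmat (\<lambda>i. 1 / u i)"
      using TMP by (simp add: matrix_mul_assoc)
    also have "\<dots> = mat 1" unfolding dmat_mult using upos
      by (simp add: dmat_def mat_def vec_eq_iff less_imp_neq[symmetric])
    finally show ?thesis .
  qed
  then have "(P ** dmat (\<lambda>i. 1 / u i)) ** (T ** M) = mat 1"
    using matrix_left_right_inverse by blast
  then have XM: "X ** M = mat 1" unfolding X_def by (simp add: matrix_mul_assoc)
  then have MX: "M ** X = mat 1" using matrix_left_right_inverse by blast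
  have inv: "matrix_inv M = X" by (rule matrix_inv_eq[OF MX XM])
  have "trace (S ** X) = trace (T ** (S ** (P ** dmat (\<lambda>i. 1 / u i))))"
    unfolding X_def by (simp add: matrix_mul_assoc trace_mul_sym[of _ T])
  also have "\<dots> = trace ((T ** S ** P) ** dmat (\<lambda>i. 1 / u i))"
    by (simp add: matrix_mul_assoc)
  also have "\<dots> = (\<Sum>i\<in>UNIV. (w i \<bullet> (S *v w i)) / u i)"
    unfolding trace_dmat T_def P_def by (simp add: PtMP)
  finally show "trace (S ** matrix_inv M) = (\<Sum>i\<in>UNIV. (w i \<bullet> (S *v w i)) / u i)"
    using inv by simp
qed


lemma psi_deriv: fixes x c :: real shows "x > 0 \<Longrightarrow> DERIV (\<lambda>u. ln u + c / u) x :> (1/x - c/x^2)"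
proof -
  assume x: "x > 0"
  have 1: "DERIV ln x :> 1/x" by (rule DERIV_ln_divide[OF x])
  have 2: "DERIV (\<lambda>u. c * inverse u) x :> c * (- (inverse x ^ Suc (Suc 0)))"
    using x by (intro DERIV_cmult DERIV_inverse) auto
  have der: "DERIV (\<lambda>u. ln u + c * inverse u) x :> 1/x + c * (- (inverse x ^ Suc (Suc 0)))"
    by (rule DERIV_add[OF 1 2])
  have eq: "1/x + c * (- (inverse x ^ Suc (Suc 0))) = 1/x - c/x^2"
    by (simp add: power2_eq_square field_simps)
  have D: "DERIV (\<lambda>u. ln u + c * inverse u) x :> 1/x - c/x^2" using der unfolding eq .
  have fe: "(\<lambda>u. ln u + c/u) = (\<lambda>u. ln u + c * inverse u)" by (simp add: divide_inverse)
  show ?thesis unfolding fe by (rule D)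
qed

lemma psi'_mono:
  fixes x y c :: real
  assumes "0 < x" "x < y" "y < 2*c"
  shows "1/x - c/x^2 < 1/y - c/y^2"
proof -
  have key: "x*y < c*(x+y)"
  proof (cases "y \<le> c")
    case True
    then have "x*(y-c) \<le> 0" using assms by (simp add: mult_nonneg_nonpos)
    moreover have "c*y > 0" using assms True by simp
    ultimately show ?thesis by (simp add: algebra_simps)
  next
    case False
    then have "x*(y-c) < y*(y-c)" using assms by (intro mult_strict_right_mono) auto
    moreover have "y*(y-c) < y*c" using assms False by (intro mult_strict_left_mono) auto
    ultimately show ?thesis by (simp add: algebra_simps)
  qed
  have eq: "(1/y - c/y^2) - (1/x - c/x^2) = (y-x)*(c*(x+y) - x*y)/(x^2*y^2)"
    using assms by (simp add: field_simps power2_eq_square)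
  have "(y-x)*(c*(x+y) - x*y)/(x^2*y^2) > 0"
    using assms key by (intro divide_pos_pos mult_pos_pos) auto
  then show ?thesis using eq by simp
qed

lemma psi_strict_lt:
  fixes a b c t :: real
  assumes "0 < a" "a < b" "b < 2*c" "0 < t" "t < 1"
  shows "ln ((1-t)*a + t*b) + c/((1-t)*a + t*b) < (1-t)*(ln a + c/a) + t*(ln b + c/b)"
proof -
  define \<psi> where "\<psi> u = ln u + c/u" for u :: real
  define \<psi>' where "\<psi>' u = 1/u - c/u^2" for u :: real
  define m where "m = (1-t)*a + t*b"
  have ma: "m - a = t*(b-a)" and bm: "b - m = (1-t)*(b-a)" unfolding m_def by (simp_all add: algebra_simps)
  have "t*(b-a) > 0" using assms by simp
  then have am: "a < m" using ma by linarith
  have "(1-t)*(b-a) > 0" using assms by simp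
  then have mb: "m < b" using bm by linarith
  have der: "\<And>x. a \<le> x \<Longrightarrow> DERIV \<psi> x :> \<psi>' x"
    unfolding \<psi>_def \<psi>'_def using assms by (intro psi_deriv) simp
  obtain z1 where z1: "a < z1" "z1 < m" "\<psi> m - \<psi> a = (m - a) * \<psi>' z1"
    using MVT2[OF am, of \<psi> \<psi>'] der by auto
  obtain z2 where z2: "m < z2" "z2 < b" "\<psi> b - \<psi> m = (b - m) * \<psi>' z2"
    using MVT2[OF mb, of \<psi> \<psi>'] der am by auto
  have d: "\<psi>' z1 < \<psi>' z2" unfolding \<psi>'_def
    by (rule psi'_mono) (use z1 z2 assms in auto)
  have "(1-t)*\<psi> a + t*\<psi> b - \<psi> m = t*(\<psi> b - \<psi> m) - (1-t)*(\<psi> m - \<psi> a)"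
    by (simp add: algebra_simps)
  also have "\<dots> = t*(1-t)*(b-a)*(\<psi>' z2 - \<psi>' z1)"
  proof -
    have e1: "\<psi> b - \<psi> m = (1-t)*(b-a)*\<psi>' z2" using z2(3) bm by simp
    have e2: "\<psi> m - \<psi> a = t*(b-a)*\<psi>' z1" using z1(3) ma by simp
    show ?thesis unfolding e1 e2 by (simp add: algebra_simps)
  qed
  also have "\<dots> > 0" using assms d by (intro mult_pos_pos) auto
  finally show ?thesis unfolding \<psi>_def m_def by simp
qed

lemma psi_strict:
  fixes a b c t :: real
  assumes "0 < a" "0 < b" "a < 2*c" "b < 2*c" "a \<noteq> b" "0 < t" "t < 1"
  shows "ln ((1-t)*a + t*b) + c/((1-t)*a + t*b) < (1-t)*(ln a + c/a) + t*(ln b + c/b)"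
proof (cases "a < b")
  case True then show ?thesis using psi_strict_lt assms by blast
next
  case False
  then have "b < a" using assms by simp
  from psi_strict_lt[OF \<open>0 < b\<close> this \<open>a < 2*c\<close>, of "1-t"] assms
  show ?thesis by (simp add: algebra_simps)
qed


lemma sym_mat_iff: "sym_mat M \<longleftrightarrow> (\<forall>i j. M $ i $ j = M $ j $ i)"
  by (auto simp: sym_mat_def transpose_def vec_eq_iff)

lemma pos_def_comb:
  fixes A B :: "real^'p^'p"
  assumes "pos_def A" "pos_def B" "0 \<le> t" "t \<le> 1"
  shows "pos_def ((1-t) *\<^sub>R A + t *\<^sub>R B)"
proof -
  have sA: "sym_mat A" and sB: "sym_mat B" using assms unfolding pos_def_def by auto
  have "sym_mat ((1-t) *\<^sub>R A + t *\<^sub>R B)"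
    using sA sB unfolding sym_mat_iff by simp
  moreover have "x \<bullet> (((1-t) *\<^sub>R A + t *\<^sub>R B) *v x) > 0" if "x \<noteq> 0" for x
  proof -
    have a: "x \<bullet> (A *v x) > 0" and b: "x \<bullet> (B *v x) > 0" using assms that unfolding pos_def_def by auto
    have "x \<bullet> (((1-t) *\<^sub>R A + t *\<^sub>R B) *v x) = (1-t) * (x \<bullet> (A *v x)) + t * (x \<bullet> (B *v x))"
      by (simp add: matrix_vector_mult_add_rdistrib scaleR_mvmult inner_add_right)
    also have "\<dots> > 0"
    proof (cases "t = 0")
      case True then show ?thesis using a by simp
    next
      case False
      then have "t * (x \<bullet> (B *v x)) > 0" using assms b by simp
      moreover have "(1-t) * (x \<bullet> (A *v x)) \<ge> 0" using assms a by simp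
      ultimately show ?thesis by linarith
    qed
    finally show ?thesis .
  qed
  ultimately show ?thesis unfolding pos_def_def by blast
qed

lemma Sigma_comb:
  "Sigma G0 G ((1-t) *\<^sub>R x + t *\<^sub>R y) = (1-t) *\<^sub>R Sigma G0 G x + t *\<^sub>R Sigma G0 G y"
proof -
  have "(\<Sum>i\<in>UNIV. ((1-t) *\<^sub>R x + t *\<^sub>R y) $ i *\<^sub>R G i)
      = (\<Sum>i\<in>UNIV. (1-t) *\<^sub>R (x $ i *\<^sub>R G i) + t *\<^sub>R (y $ i *\<^sub>R G i))"
    by (simp add: scaleR_add_left)
  also have "\<dots> = (1-t) *\<^sub>R (\<Sum>i\<in>UNIV. x $ i *\<^sub>R G i) + t *\<^sub>R (\<Sum>i\<in>UNIV. y $ i *\<^sub>R G i)"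
    by (simp add: sum.distrib scaleR_sum_right)
  finally have e: "(\<Sum>i\<in>UNIV. ((1-t) *\<^sub>R x + t *\<^sub>R y) $ i *\<^sub>R G i) =
      (1-t) *\<^sub>R (\<Sum>i\<in>UNIV. x $ i *\<^sub>R G i) + t *\<^sub>R (\<Sum>i\<in>UNIV. y $ i *\<^sub>R G i)" .
  have g: "G0 = (1-t) *\<^sub>R G0 + t *\<^sub>R G0" by (simp add: scaleR_add_left[symmetric])
  show ?thesis unfolding Sigma_def e
    by (subst g) (simp add: scaleR_add_right algebra_simps)
qed

lemma Sigma_inj:
  assumes "\<And>c. (\<Sum>i\<in>UNIV. c i *\<^sub>R G i) = 0 \<Longrightarrow> (\<forall>i. c i = 0)"
    and "Sigma G0 G x = Sigma G0 G y"
  shows "x = y"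
proof -
  have "(\<Sum>i\<in>UNIV. (x $ i - y $ i) *\<^sub>R G i) = 0"
    using assms(2) unfolding Sigma_def by (simp add: scaleR_diff_left sum_subtractf)
  then have "\<forall>i. x $ i - y $ i = 0" by (rule assms(1))
  then show ?thesis by (simp add: vec_eq_iff)
qed

lemma colmat_col: "(M ** colmat w) $ a $ b = (M *v w b) $ a"
  by (simp add: matrix_matrix_mult_def matrix_vector_mult_def colmat_def)


lemma sample_cov_n_pos:
  fixes X :: "nat \<Rightarrow> real^'p"
  assumes "pos_def (sample_cov n X)"
  shows "n > 0"
proof (rule ccontr)
  assume "\<not> n > 0"
  then have "n = 0" by simp
  then have "sample_cov n X = 0" by (simp add: sample_cov_def)
  moreover have "(\<chi> i. (1::real)) \<noteq> (0::real^'p)" by (simp add: vec_eq_iff)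
  ultimately show False using assms unfolding pos_def_def
    by (metis inner_zero_right less_irrefl matrix_vector_mult_0)
qed

theorem mainTheorem2:
  fixes G0 :: "real^'p^'p" and G :: "'r::finite \<Rightarrow> real^'p^'p"
    and n :: nat and X :: "nat \<Rightarrow> real^'p"
  assumes "sym_mat G0" and "\<And>i. sym_mat (G i)"
    and "\<And>c. (\<Sum>i\<in>UNIV. c i *\<^sub>R G i) = 0 \<Longrightarrow> (\<forall>i. c i = 0)"
    and "\<And>i. trace (G0 ** G i) = 0"
    and "Theta G0 G \<noteq> {}"
    and "pos_def (sample_cov n X)"
  shows "convex (Delta2 G0 G (sample_cov n X))
    \<and> strictly_concave_on (Delta2 G0 G (sample_cov n X)) (loglik n (sample_cov n X) G0 G)"
proof -
  define S where "S = sample_cov n X"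
  have npos: "n > 0" using sample_cov_n_pos assms(6) by blast
  have memD: "v \<in> Delta2 G0 G S \<longleftrightarrow> pos_def (Sigma G0 G v) \<and> pos_def (2 *\<^sub>R S - Sigma G0 G v)" for v
    unfolding Delta2_def Theta_def loewner_less_def by auto
  have combD: "(1-t) *\<^sub>R x + t *\<^sub>R y \<in> Delta2 G0 G S"
    if "x \<in> Delta2 G0 G S" "y \<in> Delta2 G0 G S" "0 \<le> t" "t \<le> 1" for x y t
  proof -
    have "pos_def (Sigma G0 G ((1-t) *\<^sub>R x + t *\<^sub>R y))"
      unfolding Sigma_comb using that memD by (intro pos_def_comb) auto
    moreover have "2 *\<^sub>R S - Sigma G0 G ((1-t) *\<^sub>R x + t *\<^sub>R y)
        = (1-t) *\<^sub>R (2 *\<^sub>R S - Sigma G0 G x) + t *\<^sub>R (2 *\<^sub>R S - Sigma G0 G y)"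
      unfolding Sigma_comb by (simp add: algebra_simps)
    moreover have "pos_def ((1-t) *\<^sub>R (2 *\<^sub>R S - Sigma G0 G x) + t *\<^sub>R (2 *\<^sub>R S - Sigma G0 G y))"
      using that memD by (intro pos_def_comb) auto
    ultimately show ?thesis using memD by simp
  qed
  have cvx: "convex (Delta2 G0 G S)"
    unfolding convex_def
  proof (intro ballI allI impI)
    fix x y and u v :: real
    assume xy: "x \<in> Delta2 G0 G S" "y \<in> Delta2 G0 G S" and uv0: "0 \<le> u" "0 \<le> v" "u + v = 1"
    have uv: "0 \<le> u \<and> 0 \<le> v \<and> u + v = 1" using uv0 by simp
    then have uv': "u = 1 - v" by simp
    have "(1 - v) *\<^sub>R x + v *\<^sub>R y \<in> Delta2 G0 G S" using combD[OF xy, of v] uv by simp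
    then show "u *\<^sub>R x + v *\<^sub>R y \<in> Delta2 G0 G S" using uv' by metis
  qed
  have sc: "strictly_concave_on (Delta2 G0 G S) (loglik n S G0 G)"
    unfolding strictly_concave_on_def
  proof (intro ballI allI impI)
    fix x y and t :: real
    assume x: "x \<in> Delta2 G0 G S" and y: "y \<in> Delta2 G0 G S" and xyt: "x \<noteq> y \<and> 0 < t \<and> t < 1"
    define A where "A = Sigma G0 G x"
    define B where "B = Sigma G0 G y"
    have pdA: "pos_def A" and pdB: "pos_def B" using x y memD A_def B_def by auto
    have sA: "sym_mat A" and sB: "sym_mat B" using pdA pdB unfolding pos_def_def by auto
    obtain w :: "'p \<Rightarrow> real^'p" and lam where
      wB: "\<And>i. B *v w i = lam i *\<^sub>R (A *v w i)" and wA1: "\<And>i. w i \<bullet> (A *v w i) = 1"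
      and wA0: "\<And>i j. j \<noteq> i \<Longrightarrow> w i \<bullet> (A *v w j) = 0"
      using gen_eig[OF pdA sB] by blast
    define M where "M s = (1-s) *\<^sub>R A + s *\<^sub>R B" for s :: real
    define u where "u s i = (1-s) + s * lam i" for s :: real and i
    define c where "c i = w i \<bullet> (S *v w i)" for i
    define L where "L = ln ((det (colmat w))^2)"
    define F where "F s = (\<Sum>i\<in>UNIV. ln (u s i) + c i / u s i)" for s
    have wnz: "w i \<noteq> 0" for i using wA1[of i] by auto
    have wM: "w i \<bullet> (M s *v w j) = (if i = j then u s i else 0)" for s i j
    proof -
      have "w i \<bullet> (M s *v w j) = (1-s) * (w i \<bullet> (A *v w j)) + s * (lam j * (w i \<bullet> (A *v w j)))"
        unfolding M_def by (simp add: matrix_vector_mult_add_rdistrib scaleR_mvmult inner_add_right wB)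
      then show ?thesis using wA1 wA0 by (simp add: u_def)
    qed
    have upos: "u s i > 0" if "pos_def (M s)" for s i
      using that wnz[of i] wM[of i s i] unfolding pos_def_def by auto
    have ubnd: "u s i < 2 * c i" if "pos_def (2 *\<^sub>R S - M s)" for s i
    proof -
      have "w i \<bullet> ((2 *\<^sub>R S - M s) *v w i) > 0" using that wnz[of i] unfolding pos_def_def by auto
      then show ?thesis using wM[of i s i]
        by (simp add: matrix_vector_mult_diff_rdistrib scaleR_mvmult inner_diff_right c_def)
    qed
    have val: "loglik n S G0 G z = - (real n / 2) * (F s - L)"
      if z: "Sigma G0 G z = M s" "pos_def (M s)" for z s
    proof -
      have up: "\<And>i. u s i > 0" using upos[OF z(2)] .
      note df = diag_facts[of w "M s" "u s", OF wM up]
      have "loglik n S G0 G z = - (real n / 2) * ln (det (M s)) - (real n / 2) * trace (S ** matrix_inv (M s))"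
        unfolding loglik_def z(1) ..
      also have "\<dots> = - (real n / 2) * ((\<Sum>i\<in>UNIV. ln (u s i)) - L) - (real n / 2) * (\<Sum>i\<in>UNIV. c i / u s i)"
        using df(2) df(3)[of S] by (simp add: L_def c_def)
      also have "\<dots> = - (real n / 2) * (F s - L)"
        unfolding F_def by (simp add: sum.distrib algebra_simps)
      finally show ?thesis .
    qed
    have M0: "M 0 = A" and M1: "M 1 = B" unfolding M_def by simp_all
    have Mt: "Sigma G0 G ((1-t) *\<^sub>R x + t *\<^sub>R y) = M t"
      unfolding Sigma_comb M_def A_def B_def ..
    have xyD: "(1-t) *\<^sub>R x + t *\<^sub>R y \<in> Delta2 G0 G S" using combD[OF x y] xyt by simp
    have pd0: "pos_def (M 0)" and pd1: "pos_def (M 1)" and pdt: "pos_def (M t)"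
      using pdA pdB M0 M1 xyD memD Mt by auto
    have b0: "pos_def (2 *\<^sub>R S - M 0)" and b1: "pos_def (2 *\<^sub>R S - M 1)"
      and bt: "pos_def (2 *\<^sub>R S - M t)"
      using x y xyD memD Mt M0 M1 A_def B_def by auto
    have v0: "loglik n S G0 G x = - (real n / 2) * (F 0 - L)" using val[of x 0] M0 pd0 A_def by simp
    have v1: "loglik n S G0 G y = - (real n / 2) * (F 1 - L)" using val[of y 1] M1 pd1 B_def by simp
    have vt: "loglik n S G0 G ((1-t) *\<^sub>R x + t *\<^sub>R y) = - (real n / 2) * (F t - L)"
      using val[OF Mt pdt] .
    have "\<exists>i. lam i \<noteq> 1"
    proof (rule ccontr)
      assume "\<not> (\<exists>i. lam i \<noteq> 1)"
      then have l1: "\<And>i. lam i = 1" by simp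
      have BP: "B ** colmat w = A ** colmat w"
        by (simp add: vec_eq_iff colmat_col wB l1)
      have "transpose (colmat w) ** A ** colmat w = mat 1"
        by (simp add: vec_eq_iff PtMP mat_def wA1 wA0)
      then have "(transpose (colmat w) ** A) ** colmat w = mat 1" .
      then have PI: "colmat w ** (transpose (colmat w) ** A) = mat 1"
        using matrix_left_right_inverse by blast
      have "B = B ** (colmat w ** (transpose (colmat w) ** A))" using PI by (simp add: matrix_mul_rid)
      also have "\<dots> = (B ** colmat w) ** (transpose (colmat w) ** A)" by (simp add: matrix_mul_assoc)
      also have "\<dots> = (A ** colmat w) ** (transpose (colmat w) ** A)" using BP by simp
      also have "\<dots> = A ** (colmat w ** (transpose (colmat w) ** A))" by (simp add: matrix_mul_assoc)
      also have "\<dots> = A" using PI by (simp add: matrix_mul_rid)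
      finally have "A = B" by simp
      then have "x = y" using Sigma_inj[OF assms(3)] A_def B_def by blast
      then show False using xyt by simp
    qed
    then obtain k where k: "lam k \<noteq> 1" by blast
    have per: "ln (u t i) + c i / u t i \<le> (1-t) * (ln (u 0 i) + c i / u 0 i) + t * (ln (u 1 i) + c i / u 1 i)" for i
    proof (cases "lam i = 1")
      case True then show ?thesis by (simp add: u_def algebra_simps)
    next
      case False
      have "ln ((1-t)*1 + t*lam i) + c i/((1-t)*1 + t*lam i) < (1-t)*(ln 1 + c i/1) + t*(ln (lam i) + c i/lam i)"
        using psi_strict[of 1 "lam i" "c i" t] upos[OF pd1, of i] ubnd[OF b0, of i] ubnd[OF b1, of i] False xyt
        by (simp add: u_def)
      then show ?thesis by (simp add: u_def)
    qed
    have perk: "ln (u t k) + c k / u t k < (1-t) * (ln (u 0 k) + c k / u 0 k) + t * (ln (u 1 k) + c k / u 1 k)"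
    proof -
      have "ln ((1-t)*1 + t*lam k) + c k/((1-t)*1 + t*lam k) < (1-t)*(ln 1 + c k/1) + t*(ln (lam k) + c k/lam k)"
        using psi_strict[of 1 "lam k" "c k" t] upos[OF pd1, of k] ubnd[OF b0, of k] ubnd[OF b1, of k] k xyt
        by (simp add: u_def)
      then show ?thesis by (simp add: u_def)
    qed
    have "F t < (\<Sum>i\<in>UNIV. (1-t) * (ln (u 0 i) + c i / u 0 i) + t * (ln (u 1 i) + c i / u 1 i))"
      unfolding F_def by (rule sum_strict_mono_ex1) (use per perk in auto)
    also have "\<dots> = (1-t) * F 0 + t * F 1"
    proof -
      have gen: "(\<Sum>i\<in>UNIV. (1-t) * g0 i + t * g1 i) = (1-t) * sum g0 UNIV + t * sum g1 UNIV"
        for g0 g1 :: "'p \<Rightarrow> real" by (simp add: sum.distrib sum_distrib_left)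
      show ?thesis unfolding F_def by (rule gen)
    qed
    finally have Fin: "F t < (1-t) * F 0 + t * F 1" .
    have "(1-t) * loglik n S G0 G x + t * loglik n S G0 G y
        = - (real n / 2) * (((1-t) * F 0 + t * F 1) - L)"
      unfolding v0 v1 by (simp add: field_simps)
    also have "\<dots> < - (real n / 2) * (F t - L)"
      using Fin npos by (simp add: mult_less_cancel_left)
    finally show "(1-t) * loglik n S G0 G x + t * loglik n S G0 G y < loglik n S G0 G ((1-t) *\<^sub>R x + t *\<^sub>R y)"
      using vt by simp
  qed
  show ?thesis using cvx sc unfolding S_def by simp
qed


end
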